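(* Let $(X_j,Y_j,S_j)$, $j\in\mathbb{Z}$, be a FAIM process. Then for every $n\ge1$, \[\hat K_{n+1}\le\begin{cases}\psi(0)\,\hat K_n^2 & \text{if } B_{n+1}=0,\\ 2\hat K_n & \text{if } B_{n+1}=1,\end{cases}\] where $\psi(0)=\max_{a\in\mathcal{S}}1/\pi_0(a)$ and $\pi_0$ is the stationary distribution of the state chain.
   Context: FAIM process: $(X_j,Y_j,S_j)$, $j\in\mathbb{Z}$, is strictly stationary, $X_j\in\{0,1\}$, $Y_j$ takes values in a finite alphabet, $S_j$ in a finite set $\mathcal{S}$; the conditional law $P_{X_j,Y_j,S_j|S_{j-1}}$ does not depend on $j$; and conditioned on $S_{j-1}$, $\{X_k,Y_k,S_k\}_{k\ge j}$ is independent of $\{X_l,Y_l,S_{l-1}\}_{l<j}$. The state sequence $(S_j)$ is a homogeneous, finite-state, stationary, aperiodic and irreducible Markov chain. For binary $U$ and finite-valued $Q$, $K(U|Q)=\sum_q|P_{U,Q}(0,q)-P_{U,Q}(1,q)|$; conditioning on several variables means treating the tuple as the observation. Polarization setup: for $n\ge1$, $N=2^n$, $G_N=B_NG_2^{\otimes n}$ with $G_2=\begin{bmatrix}1&0\\1&1\end{bmatrix}$ and $B_N$ the bit-reversal permutation matrix (arithmetic modulo 2); $U_1^N=X_1^NG_N$, $Q_i=(U_1^{i-1},Y_1^N)$. Let $B_1,B_2,\dots$ be i.i.d. Bernoulli$(1/2)$ and, for each $n$, $i-1=\sum_{j=1}^nB_j2^{n-j}$. The boundary-state-informed total variation process is $\hat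 K_n=K(U_i|Q_i,S_N,S_0)$ (with $N=2^n$); $\hat K_{n+1}$ is defined in the same way with $n+1$ in place of $n$ and the same $B_1,B_2,\dots$. *)

theory Defs
  imports Complex_Main
begin

text \<open>A FAIM process is determined (on every finite window) by its time-invariant
  kernel W a (x,y,s) = P(X_j=x, Y_j=y, S_j=s | S_{j-1}=a) and the stationary law pi
  of S_0.\<close>

definition state_trans :: "('s \<Rightarrow> bool \<times> 'y \<times> 's \<Rightarrow> real) \<Rightarrow> 's \<Rightarrow> 's \<Rightarrow> real" where
  "state_trans W a b = (\<Sum>xy\<in>(UNIV :: (bool \<times> 'y) set). W a (fst xy, snd xy, b))"

fun trans_pow :: "('s \<Rightarrow> 's \<Rightarrow> real) \<Rightarrow> nat \<Rightarrow> 's \<Rightarrow> 's \<Rightarrow> real" where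
  "trans_pow P 0 a b = (if a = b then 1 else 0)"
| "trans_pow P (Suc m) a b = (\<Sum>c\<in>UNIV. trans_pow P m a c * P c b)"

definition irreducible_chain :: "('s \<Rightarrow> 's \<Rightarrow> real) \<Rightarrow> bool" where
  "irreducible_chain P \<longleftrightarrow> (\<forall>a b. \<exists>m>0. trans_pow P m a b > 0)"

definition aperiodic_chain :: "('s \<Rightarrow> 's \<Rightarrow> real) \<Rightarrow> bool" where
  "aperiodic_chain P \<longleftrightarrow> (\<forall>a. Gcd {m. m > 0 \<and> trans_pow P m a a > 0} = 1)"

definition is_faim :: "('s::finite \<Rightarrow> bool \<times> 'y::finite \<times> 's \<Rightarrow> real) \<Rightarrow> ('s \<Rightarrow> real) \<Rightarrow> bool" where
  "is_faim W \<pi> \<longleftrightarrow>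
     (\<forall>a t. W a t \<ge> 0) \<and> (\<forall>a. (\<Sum>t\<in>UNIV. W a t) = 1) \<and>
     (\<forall>a. \<pi> a \<ge> 0) \<and> (\<Sum>a\<in>UNIV. \<pi> a) = 1 \<and>
     (\<forall>b. (\<Sum>a\<in>UNIV. \<pi> a * state_trans W a b) = \<pi> b) \<and>
     irreducible_chain (state_trans W) \<and> aperiodic_chain (state_trans W)"

text \<open>Joint probability of S_0^N = ss, X_1^N = xs, Y_1^N = ys (0-indexed lists).\<close>
definition faim_prob :: "('s \<Rightarrow> bool \<times> 'y \<times> 's \<Rightarrow> real) \<Rightarrow> ('s \<Rightarrow> real) \<Rightarrow>
    bool list \<Rightarrow> 'y list \<Rightarrow> 's list \<Rightarrow> real" where
  "faim_prob W \<pi> xs ys ss = \<pi> (ss ! 0) * (\<Prod>j<length xs. W (ss ! j) (xs ! j, ys ! j, ss ! Suc j))"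

section \<open>Polar transform G_N = B_N G_2^{\<otimes>n} over GF(2) (0-indexed entries)\<close>

definition G2 :: "nat \<Rightarrow> nat \<Rightarrow> nat" where
  "G2 a b = (if (a = 0 \<and> b = 0) \<or> (a = 1 \<and> b = 0) \<or> (a = 1 \<and> b = 1) then 1 else 0)"

text \<open>Kronecker power: (A \<otimes> B)(k,l) = A(k div m, l div m) * B(k mod m, l mod m).\<close>
fun kron_pow :: "nat \<Rightarrow> nat \<Rightarrow> nat \<Rightarrow> nat" where
  "kron_pow 0 k l = (if k = 0 \<and> l = 0 then 1 else 0)"
| "kron_pow (Suc n) k l = G2 (k div 2^n) (l div 2^n) * kron_pow n (k mod 2^n) (l mod 2^n)"

definition bitrev :: "nat \<Rightarrow> nat \<Rightarrow> nat" where
  "bitrev n k = (\<Sum>t<n. if odd (k div 2^t) then 2^(n - 1 - t) else 0)"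

definition bitrev_mat :: "nat \<Rightarrow> nat \<Rightarrow> nat \<Rightarrow> nat" where
  "bitrev_mat n k m = (if m = bitrev n k then 1 else 0)"

definition polar_mat :: "nat \<Rightarrow> nat \<Rightarrow> nat \<Rightarrow> nat" where
  "polar_mat n k l = (\<Sum>m<2^n. bitrev_mat n k m * kron_pow n m l) mod 2"

text \<open>U_1^N = X_1^N G_N (row vector times matrix, mod 2); True encodes the bit 1.\<close>
definition polar :: "nat \<Rightarrow> bool list \<Rightarrow> bool list" where
  "polar n xs = map (\<lambda>l. (\<Sum>k<2^n. (if xs ! k then 1 else 0) * polar_mat n k l) mod 2 = 1) [0..<2^n]"

text \<open>P(U_i = u, U_1^{i-1} = pre, Y_1^N = ys, S_0 = a, S_N = b), N = 2^n.\<close>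
definition joint_UQ :: "('s::finite \<Rightarrow> bool \<times> 'y::finite \<times> 's \<Rightarrow> real) \<Rightarrow> ('s \<Rightarrow> real) \<Rightarrow>
    nat \<Rightarrow> nat \<Rightarrow> bool \<Rightarrow> bool list \<Rightarrow> 'y list \<Rightarrow> 's \<Rightarrow> 's \<Rightarrow> real" where
  "joint_UQ W \<pi> n i u pre ys a b =
     (\<Sum>xs\<in>{xs :: bool list. length xs = 2^n}.
       \<Sum>ss\<in>{ss :: 's list. length ss = 2^n + 1 \<and> ss ! 0 = a \<and> ss ! (2^n) = b}.
         if take i (polar n xs) = pre @ [u] then faim_prob W \<pi> xs ys ss else 0)"

text \<open>K(U_i | U_1^{i-1}, Y_1^N, S_N, S_0); bit 0 is False, bit 1 is True.\<close>
definition Khat :: "('s::finite \<Rightarrow> bool \<times> 'y::finite \<times> 's \<Rightarrow> real) \<Rightarrow> ('s \<Rightarrow> real) \<Rightarrow>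
    nat \<Rightarrow> nat \<Rightarrow> real" where
  "Khat W \<pi> n i =
     (\<Sum>pre\<in>{pre :: bool list. length pre = i - 1}.
       \<Sum>ys\<in>{ys :: 'y list. length ys = 2^n}.
         \<Sum>a\<in>UNIV. \<Sum>b\<in>UNIV.
           \<bar>joint_UQ W \<pi> n i False pre ys a b - joint_UQ W \<pi> n i True pre ys a b\<bar>)"

definition polar_index :: "(nat \<Rightarrow> bool) \<Rightarrow> nat \<Rightarrow> nat" where
  "polar_index B n = 1 + (\<Sum>j\<in>{1..n}. (if B j then 1 else 0) * 2^(n - j))"

definition psi0 :: "('s::finite \<Rightarrow> real) \<Rightarrow> real" where
  "psi0 \<pi> = Max ((\<lambda>a. 1 / \<pi> a) ` UNIV)"

end

theory Submission
  imports Defs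
begin


abbreviation L :: "nat \<Rightarrow> 'a list set" where "L k \<equiv> {xs. length xs = k}"

lemma finite_L[simp]: "finite (L k :: ('a::finite) list set)"
  using finite_lists_length_eq[OF finite_UNIV, of k] by simp

lemma sum_L_Suc:
  fixes f :: "('a::finite) list \<Rightarrow> 'b::comm_monoid_add"
  shows "(\<Sum>xs\<in>L (Suc k). f xs) = (\<Sum>x\<in>UNIV. \<Sum>xs\<in>L k. f (x # xs))"
proof -
  have "(\<lambda>(x, xs). x # xs) ` (UNIV \<times> (L k :: 'a list set)) = L (Suc k)"
    by (auto simp: length_Suc_conv image_iff)
  moreover have "inj_on (\<lambda>(x, xs). x # xs) (UNIV \<times> (L k :: 'a list set))"
    by (auto simp: inj_on_def)
  ultimately have "bij_betw (\<lambda>(x, xs). x # xs) (UNIV \<times> (L k :: 'a list set)) (L (Suc k))"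
    by (simp add: bij_betw_def)
  from sum.reindex_bij_betw[OF this, of f] show ?thesis
    by (simp add: sum.cartesian_product split_beta)
qed

lemma sum_L_app:
  fixes f :: "('a::finite) list \<Rightarrow> 'b::comm_monoid_add"
  shows "(\<Sum>xs\<in>L (k1 + k2). f xs) = (\<Sum>xs1\<in>L k1. \<Sum>xs2\<in>L k2. f (xs1 @ xs2))"
proof -
  have "L (k1 + k2) \<subseteq> (\<lambda>(x, xs). x @ xs) ` (L k1 \<times> (L k2 :: 'a list set))"
  proof
    fix xs :: "'a list" assume a: "xs \<in> L (k1 + k2)"
    then have "xs = (\<lambda>(x, xs). x @ xs) (take k1 xs, drop k1 xs)" by simp
    moreover have "(take k1 xs, drop k1 xs) \<in> L k1 \<times> L k2" using a by auto
    ultimately show "xs \<in> (\<lambda>(x, xs). x @ xs) ` (L k1 \<times> L k2)" by blast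
  qed
  then have "(\<lambda>(x, xs). x @ xs) ` (L k1 \<times> (L k2 :: 'a list set)) = L (k1 + k2)" by auto
  moreover have "inj_on (\<lambda>(x, xs). x @ xs) (L k1 \<times> (L k2 :: 'a list set))"
    by (auto simp: inj_on_def)
  ultimately have "bij_betw (\<lambda>(x, xs). x @ xs) (L k1 \<times> (L k2 :: 'a list set)) (L (k1 + k2))"
    by (simp add: bij_betw_def)
  from sum.reindex_bij_betw[OF this, of f] show ?thesis
    by (simp add: sum.cartesian_product split_beta)
qed

lemma sum_L_snoc:
  fixes f :: "('a::finite) list \<Rightarrow> 'b::comm_monoid_add"
  shows "(\<Sum>xs\<in>L (Suc k). f xs) = (\<Sum>xs\<in>L k. \<Sum>x\<in>UNIV. f (xs @ [x]))"
proof -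
  have "(\<Sum>xs\<in>L (k + 1). f xs) = (\<Sum>xs1\<in>L k. \<Sum>xs2\<in>L 1. f (xs1 @ xs2))"
    by (rule sum_L_app)
  also have "\<dots> = (\<Sum>xs\<in>L k. \<Sum>x\<in>UNIV. f (xs @ [x]))"
    by (simp add: sum_L_Suc)
  finally show ?thesis by simp
qed

fun ilv :: "bool list \<Rightarrow> bool list \<Rightarrow> bool list" where
  "ilv (v # vs) (w # ws) = (v \<noteq> w) # w # ilv vs ws"
| "ilv _ _ = []"

lemma length_ilv[simp]: "length (ilv vs ws) = 2 * min (length vs) (length ws)"
  by (induction vs ws rule: ilv.induct) auto

lemma ilv_inj: "length p1 = length p2 \<Longrightarrow> length q1 = length q2 \<Longrightarrow> length p1 = length q1 \<Longrightarrow>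
   ilv p1 p2 = ilv q1 q2 \<longleftrightarrow> p1 = q1 \<and> p2 = q2"
proof (induction p1 p2 arbitrary: q1 q2 rule: ilv.induct)
  case (1 v vs w ws)
  then show ?case by (cases q1; cases q2) auto
qed auto

lemma take_ilv_even: "take (2 * k) (ilv vs ws) = ilv (take k vs) (take k ws)"
proof (induction k arbitrary: vs ws)
  case (Suc k)
  then show ?case by (cases vs; cases ws) auto
qed simp

lemma take_ilv_odd: "k < length vs \<Longrightarrow> k < length ws \<Longrightarrow>
  take (Suc (2 * k)) (ilv vs ws) = ilv (take k vs) (take k ws) @ [vs ! k \<noteq> ws ! k]"
proof (induction k arbitrary: vs ws)
  case 0
  then show ?case by (cases vs; cases ws) auto
next
  case (Suc k)
  then show ?case by (cases vs; cases ws) auto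
qed

lemma ilv_snoc: "length vs = length ws \<Longrightarrow> ilv (vs @ [v]) (ws @ [w]) = ilv vs ws @ [v \<noteq> w, w]"
  by (induction vs ws rule: ilv.induct) auto

lemma take_ilv_even2: "k < length vs \<Longrightarrow> k < length ws \<Longrightarrow>
  take (2 * Suc k) (ilv vs ws) = ilv (take k vs) (take k ws) @ [vs ! k \<noteq> ws ! k, ws ! k]"
  by (simp only: take_ilv_even take_Suc_conv_app_nth) (simp add: ilv_snoc)

lemma sum_L_ilv:
  fixes f :: "bool list \<Rightarrow> 'b::comm_monoid_add"
  shows "(\<Sum>xs\<in>L (2 * k). f xs) = (\<Sum>p1\<in>L k. \<Sum>p2\<in>L k. f (ilv p1 p2))"
proof (induction k arbitrary: f)
  case 0
  then show ?case by simp
next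
  case (Suc k)
  have "(\<Sum>xs\<in>L (2 * Suc k). f xs) = (\<Sum>x\<in>UNIV. \<Sum>y\<in>UNIV. \<Sum>r\<in>L (2 * k). f (x # y # r))"
    by (simp add: sum_L_Suc)
  also have "\<dots> = (\<Sum>x\<in>UNIV. \<Sum>y\<in>UNIV. \<Sum>p1\<in>L k. \<Sum>p2\<in>L k. f (x # y # ilv p1 p2))"
    using Suc by simp
  also have "\<dots> = (\<Sum>v\<in>UNIV. \<Sum>w\<in>UNIV. \<Sum>p1\<in>L k. \<Sum>p2\<in>L k. f ((v \<noteq> w) # w # ilv p1 p2))"
    by (simp add: UNIV_bool add_ac)
  also have "\<dots> = (\<Sum>p1\<in>L (Suc k). \<Sum>p2\<in>L (Suc k). f (ilv p1 p2))"
    apply (simp add: sum_L_Suc)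
    apply (subst sum.swap[of _ UNIV "L k"])
    apply simp
    done
  finally show ?case .
qed



lemma G2_le1: "G2 a b \<le> 1" by (simp add: G2_def)

lemma kron_le1: "kron_pow n k l \<le> 1"
  by (induction n arbitrary: k l) (auto simp: G2_def)

lemma kron_Suc_low:
  "kron_pow (Suc n) k l = kron_pow n (k div 2) (l div 2) * G2 (k mod 2) (l mod 2)"
proof (induction n arbitrary: k l)
  case 0
  then show ?case by (auto simp: G2_def)
next
  case (Suc n)
  have e1: "k div 2 ^ Suc n = k div 2 div 2 ^ n" for k :: nat
    by (simp add: div_mult2_eq)
  have e2: "k mod 2 ^ Suc n div 2 = k div 2 mod 2 ^ n" for k :: nat
    by (simp only: power_Suc mod_mult2_eq)
  have e3: "k mod 2 ^ Suc n mod 2 = k mod 2" for k :: nat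
    by (simp add: mod_mod_cancel)
  show ?case
    using Suc[of "k mod 2 ^ Suc n" "l mod 2 ^ Suc n"]
    by (simp only: kron_pow.simps e1 e2 e3)
qed



lemma sum_lessThan_plus:
  fixes f :: "nat \<Rightarrow> 'b::comm_monoid_add"
  shows "(\<Sum>k<a + b. f k) = (\<Sum>k<a. f k) + (\<Sum>k<b. f (a + k))"
  by (induction b) (simp_all add: add_ac)

lemma odd_mod_div: "t < n \<Longrightarrow> odd ((k::nat) mod 2 ^ n div 2 ^ t) = odd (k div 2 ^ t)"
proof -
  assume "t < n"
  have "odd ((k::nat) mod 2 ^ n div 2 ^ t) = bit (take_bit n k) t"
    by (simp add: bit_iff_odd take_bit_eq_mod)
  also have "\<dots> = bit k t" using \<open>t < n\<close> by (simp add: bit_take_bit_iff)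
  also have "\<dots> = odd (k div 2 ^ t)" by (simp add: bit_iff_odd)
  finally show ?thesis .
qed

lemma bitrev_Suc: "bitrev (Suc n) k = 2 * bitrev n (k mod 2 ^ n) + (k div 2 ^ n) mod 2"
proof -
  have "bitrev (Suc n) k = (\<Sum>t<n. if odd (k div 2^t) then 2^(Suc n - 1 - t) else 0) + (if odd (k div 2^n) then 1 else 0)"
    by (simp only: bitrev_def sum.lessThan_Suc) simp
  also have "(\<Sum>t<n. if odd (k div 2^t) then 2^(Suc n - 1 - t) else 0) = (\<Sum>t<n. if odd (k div 2^t) then 2^(n - t) else (0::nat))"
    by (rule sum.cong) auto
  also have "(\<Sum>t<n. if odd (k div 2^t) then 2^(n - t) else 0) = 2 * bitrev n (k mod 2 ^ n)"
    unfolding bitrev_def sum_distrib_left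
  proof (rule sum.cong[OF refl])
    fix t assume "t \<in> {..<n}"
    then have "t < n" by simp
    then have "(2::nat) ^ (n - t) = 2 * 2 ^ (n - 1 - t)"
      by (metis Suc_diff_Suc diff_Suc_1 diff_diff_left plus_1_eq_Suc power_Suc)
    then show "(if odd (k div 2 ^ t) then 2 ^ (n - t) else 0) =
          (2::nat) * (if odd (k mod 2 ^ n div 2 ^ t) then 2 ^ (n - 1 - t) else 0)"
      using odd_mod_div[OF \<open>t < n\<close>, of k] by simp
  qed
  finally show ?thesis by (simp add: odd_iff_mod_2_eq_one)
qed

lemma bitrev_less: "bitrev n k < 2 ^ n"
proof (induction n arbitrary: k)
  case 0
  then show ?case by (simp add: bitrev_def)
next
  case (Suc n)
  have "(k div 2 ^ n) mod 2 \<le> 1" by simp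
  then show ?case using Suc[of "k mod 2 ^ n"] by (simp add: bitrev_Suc)
qed

lemma polar_mat_eq: "polar_mat n k l = kron_pow n (bitrev n k) l"
proof -
  have "(\<Sum>m<2^n. bitrev_mat n k m * kron_pow n m l) = (\<Sum>m<2^n. if m = bitrev n k then kron_pow n m l else 0)"
    by (rule sum.cong[OF refl]) (simp add: bitrev_mat_def)
  also have "\<dots> = kron_pow n (bitrev n k) l"
    using bitrev_less[of n k] by simp
  finally have "(\<Sum>m<2^n. bitrev_mat n k m * kron_pow n m l) = kron_pow n (bitrev n k) l" .
  then show ?thesis using kron_le1[of n "bitrev n k" l]
    by (simp add: polar_mat_def)
qed

lemma GN_Suc: "k < 2 ^ Suc n \<Longrightarrow>
  kron_pow (Suc n) (bitrev (Suc n) k) l = kron_pow n (bitrev n (k mod 2 ^ n)) (l div 2) * G2 (k div 2 ^ n) (l mod 2)"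
proof -
  assume k: "k < 2 ^ Suc n"
  then have "k div 2 ^ n < 2" by (simp add: div_less_iff_less_mult)
  then have c: "(k div 2 ^ n) mod 2 = k div 2 ^ n" "k div 2 ^ n div 2 = 0" by simp_all
  show ?thesis
    by (simp only: kron_Suc_low bitrev_Suc c) (simp add: c)
qed

definition pb :: "nat \<Rightarrow> bool list \<Rightarrow> nat \<Rightarrow> bool" where
  "pb n xs l = ((\<Sum>k<2^n. (if xs ! k then 1 else 0) * kron_pow n (bitrev n k) l) mod 2 = 1)"

lemma polar_pb: "polar n xs = map (pb n xs) [0..<2^n]"
  by (simp add: polar_def pb_def polar_mat_eq)

lemma pb_Suc:
  assumes "length xs1 = 2 ^ n"
  shows "pb (Suc n) (xs1 @ xs2) l =
     (if even l then (pb n xs1 (l div 2) \<noteq> pb n xs2 (l div 2)) else pb n xs2 (l div 2))"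
proof -
  let ?f = "\<lambda>xs k. (if xs ! k then 1 else 0) * kron_pow n (bitrev n k) (l div 2)"
  let ?S1 = "\<Sum>k<2^n. ?f xs1 k" and ?S2 = "\<Sum>k<2^n. ?f xs2 k"
  have "(\<Sum>k<2^Suc n. (if (xs1 @ xs2) ! k then 1 else 0) * kron_pow (Suc n) (bitrev (Suc n) k) l)
      = (\<Sum>k<2^n + 2^n. (if (xs1 @ xs2) ! k then 1 else 0) * kron_pow (Suc n) (bitrev (Suc n) k) l)"
    by (simp only: power_Suc mult_2)
  also have "\<dots> = (\<Sum>k<2^n. ?f xs1 k * G2 0 (l mod 2)) + (\<Sum>k<2^n. ?f xs2 k * G2 1 (l mod 2))"
    unfolding sum_lessThan_plus
  proof (intro arg_cong2[where f="(+)"] sum.cong refl)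
    fix k assume "k \<in> {..<(2::nat)^n}"
    then have k: "k < 2 ^ n" by simp
    then have k': "k < 2 ^ Suc n" by simp
    show "(if (xs1 @ xs2) ! k then 1 else 0) * kron_pow (Suc n) (bitrev (Suc n) k) l = ?f xs1 k * G2 0 (l mod 2)"
      using assms k by (simp only: GN_Suc[OF k'] nth_append) simp
    have "(2::nat) ^ n + k < 2 ^ Suc n" using k by simp
    moreover have "(2 ^ n + k) div 2 ^ n = 1" "(2 ^ n + k) mod 2 ^ n = k" using k by simp_all
    ultimately show "(if (xs1 @ xs2) ! (2 ^ n + k) then 1 else 0) * kron_pow (Suc n) (bitrev (Suc n) (2 ^ n + k)) l
       = ?f xs2 k * G2 1 (l mod 2)"
      using assms by (simp only: GN_Suc nth_append) simp
  qed
  also have "\<dots> = (if even l then ?S1 + ?S2 else ?S2)"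
    by (simp add: G2_def sum_distrib_right[symmetric] even_iff_mod_2_eq_zero)
  finally have e: "(\<Sum>k<2^Suc n. (if (xs1 @ xs2) ! k then 1 else 0) * kron_pow (Suc n) (bitrev (Suc n) k) l)
      = (if even l then ?S1 + ?S2 else ?S2)" .
  show ?thesis
  proof (cases "even l")
    case True
    then show ?thesis unfolding pb_def e
      by (simp only: if_True odd_iff_mod_2_eq_one[symmetric]) simp
  next
    case False
    then show ?thesis unfolding pb_def e
      by (simp only: if_False)
  qed
qed



lemma nth_ilv: "l < length (ilv vs ws) \<Longrightarrow>
  ilv vs ws ! l = (if even l then vs ! (l div 2) \<noteq> ws ! (l div 2) else ws ! (l div 2))"
proof (induction vs ws arbitrary: l rule: ilv.induct)
  case (1 v vs w ws)
  show ?case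
  proof (cases l)
    case 0
    then show ?thesis by simp
  next
    case (Suc l1)
    show ?thesis
    proof (cases l1)
      case 0
      then show ?thesis using Suc by simp
    next
      case (Suc l2)
      then have "l2 < length (ilv vs ws)" using 1(2) \<open>l = Suc l1\<close> by simp
      from "1.IH"[OF this] show ?thesis using Suc \<open>l = Suc l1\<close> by simp
    qed
  qed
qed auto

lemma length_polar[simp]: "length (polar n xs) = 2 ^ n"
  by (simp add: polar_def)

lemma polar_Suc:
  assumes "length xs1 = 2 ^ n"
  shows "polar (Suc n) (xs1 @ xs2) = ilv (polar n xs1) (polar n xs2)"
proof (rule nth_equalityI)
  show "length (polar (Suc n) (xs1 @ xs2)) = length (ilv (polar n xs1) (polar n xs2))" by simp
  fix l assume "l < length (polar (Suc n) (xs1 @ xs2))"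
  then have l: "l < 2 * 2 ^ n" by simp
  then have "l div 2 < 2 ^ n" by simp
  then show "polar (Suc n) (xs1 @ xs2) ! l = ilv (polar n xs1) (polar n xs2) ! l"
    using l by (simp add: nth_ilv polar_pb pb_Suc[OF assms])
qed



fun R :: "('s::finite \<Rightarrow> bool \<times> 'y \<times> 's \<Rightarrow> real) \<Rightarrow> bool list \<Rightarrow> 'y list \<Rightarrow> 's \<Rightarrow> 's \<Rightarrow> real" where
  "R W [] ys a b = (if a = b then 1 else 0)"
| "R W (x # xs) ys a b = (\<Sum>c\<in>UNIV. W a (x, hd ys, c) * R W xs (tl ys) c b)"

lemma L_0[simp]: "L 0 = {[]}" by auto

lemma R_nonneg: "(\<And>a t. W a t \<ge> 0) \<Longrightarrow> R W xs ys a b \<ge> 0"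
  by (induction xs arbitrary: ys a) (auto intro!: sum_nonneg)

lemma sum_UNIV_triple:
  "(\<Sum>t\<in>UNIV. f t) = (\<Sum>x\<in>UNIV. \<Sum>y\<in>UNIV. \<Sum>c\<in>UNIV. f (x, y, c))"
  for f :: "'a::finite \<times> 'b::finite \<times> 'c::finite \<Rightarrow> 'd::comm_monoid_add"
  by (simp add: sum.cartesian_product UNIV_Times_UNIV[symmetric] del: UNIV_Times_UNIV)

lemma R_total:
  fixes W :: "'s::finite \<Rightarrow> bool \<times> 'y::finite \<times> 's \<Rightarrow> real"
  assumes "\<And>a. (\<Sum>t\<in>UNIV. W a t) = 1"
  shows "(\<Sum>xs\<in>L k. \<Sum>ys\<in>L k. \<Sum>b\<in>UNIV. R W xs ys a b) = 1"
proof (induction k arbitrary: a)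
  case 0
  then show ?case by simp
next
  case (Suc k)
  have "(\<Sum>xs\<in>L (Suc k). \<Sum>ys\<in>L (Suc k). \<Sum>b\<in>UNIV. R W xs ys a b) =
     (\<Sum>x\<in>UNIV. \<Sum>y\<in>UNIV. \<Sum>c\<in>UNIV. W a (x, y, c) * (\<Sum>xs\<in>L k. \<Sum>ys\<in>L k. \<Sum>b\<in>UNIV. R W xs ys c b))"
    apply (simp add: sum_L_Suc sum_distrib_left sum.swap[where A="L k :: bool list set" and B="UNIV :: 'y set"]
       sum.swap[where A="L k :: bool list set" and B="UNIV :: 's set"]
       sum.swap[where A="L k :: 'y list set" and B="UNIV :: 's set"])
    apply (rule sum.cong[OF refl], rule sum.cong[OF refl], rule sum.swap)
    done
  also have "\<dots> = 1" using Suc assms by (simp add: sum_UNIV_triple)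
  finally show ?case .
qed

lemma state_trans_eq: "state_trans W a c = (\<Sum>x\<in>UNIV. \<Sum>y\<in>UNIV. W a (x, y, c))"
  for W :: "'s \<Rightarrow> bool \<times> 'y::finite \<times> 's \<Rightarrow> real"
  unfolding state_trans_def
  by (simp add: UNIV_Times_UNIV[symmetric] sum.cartesian_product case_prod_beta del: UNIV_Times_UNIV)

lemma R_stat:
  fixes W :: "'s::finite \<Rightarrow> bool \<times> 'y::finite \<times> 's \<Rightarrow> real"
  assumes st: "\<And>b. (\<Sum>a\<in>UNIV. \<pi> a * state_trans W a b) = \<pi> b"
  shows "(\<Sum>xs\<in>L k. \<Sum>ys\<in>L k. \<Sum>a\<in>UNIV. \<pi> a * R W xs ys a b) = \<pi> b"
proof (induction k)
  case 0
  then show ?case by (simp add: if_distrib[where f="\<lambda>x. _ * x"] cong: if_cong)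
next
  case (Suc k)
  have tr: "(\<Sum>x\<in>UNIV. \<Sum>y\<in>UNIV. \<Sum>a\<in>UNIV. \<pi> a * W a (x, y, c)) = \<pi> c" for c
  proof -
    have "(\<Sum>a\<in>UNIV. \<pi> a * state_trans W a c) = (\<Sum>a\<in>UNIV. \<Sum>x\<in>UNIV. \<Sum>y\<in>UNIV. \<pi> a * W a (x, y, c))"
      by (simp add: state_trans_eq sum_distrib_left)
    also have "\<dots> = (\<Sum>x\<in>UNIV. \<Sum>y\<in>UNIV. \<Sum>a\<in>UNIV. \<pi> a * W a (x, y, c))"
      by (simp add: sum.swap[where A="UNIV :: 's set" and B="UNIV :: bool set"]
          sum.swap[where A="UNIV :: 's set" and B="UNIV :: 'y set"])
    finally show ?thesis using st by simp
  qed
  have "(\<Sum>xs\<in>L (Suc k). \<Sum>ys\<in>L (Suc k). \<Sum>a\<in>UNIV. \<pi> a * R W xs ys a b) =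
     (\<Sum>xs\<in>L k. \<Sum>ys\<in>L k. \<Sum>c\<in>UNIV. (\<Sum>x\<in>UNIV. \<Sum>y\<in>UNIV. \<Sum>a\<in>UNIV. \<pi> a * W a (x, y, c)) * R W xs ys c b)"
    apply (simp add: sum_L_Suc sum_distrib_left sum_distrib_right mult.assoc
       sum.swap[where A="UNIV :: bool set" and B="L k :: bool list set"]
       sum.swap[where A="UNIV :: bool set" and B="L k :: 'y list set"]
       sum.swap[where A="UNIV :: 'y set" and B="L k :: 'y list set"]
       sum.swap[where A="UNIV :: 's set" and B="UNIV :: bool set"]
       sum.swap[where A="UNIV :: 's set" and B="UNIV :: 'y set"])
    apply (rule sum.cong[OF refl], rule sum.cong[OF refl], rule sum.cong[OF refl], rule sum.cong[OF refl], rule sum.swap)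
    done
  also have "\<dots> = \<pi> b" using Suc by (simp add: tr)
  finally show ?case .
qed

lemma R_append:
  "length xs1 = length ys1 \<Longrightarrow>
   R W (xs1 @ xs2) (ys1 @ ys2) a b = (\<Sum>m\<in>UNIV. R W xs1 ys1 a m * R W xs2 ys2 m b)"
proof (induction xs1 arbitrary: ys1 a)
  case Nil
  then show ?case by (simp add: if_distrib[where f="\<lambda>x. x * _"] cong: if_cong)
next
  case (Cons x xs1)
  then obtain y ys1' where ys1: "ys1 = y # ys1'" "length xs1 = length ys1'" by (cases ys1) auto
  show ?case
    by (simp add: ys1 Cons.IH[OF ys1(2)] sum_distrib_left sum_distrib_right mult.assoc)
       (rule sum.swap)
qed

lemma sum_if_eq_conj: "(\<Sum>s\<in>(UNIV::'a::finite set). if s = a \<and> Q then F s else 0) = (if Q then F a else (0::'b::comm_monoid_add))"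
  by (cases Q) simp_all

lemma R_sum:
  "length ys = length xs \<Longrightarrow>
   (\<Sum>ss\<in>L (Suc (length xs)). if ss ! 0 = a \<and> ss ! length xs = b
        then (\<Prod>j<length xs. W (ss ! j) (xs ! j, ys ! j, ss ! Suc j)) else 0) = R W xs ys a b"
proof (induction xs arbitrary: ys a)
  case Nil
  have "(\<Sum>x\<in>UNIV. if x = a \<and> x = b then 1 else 0) = (if a = b then 1 else (0::real))"
    by (cases "a = b") (auto intro!: sum.neutral)
  then show ?case by (simp only: sum_L_Suc L_0 list.size lessThan_0 prod.empty) simp
next
  case (Cons x xs)
  then obtain y ys' where ys: "ys = y # ys'" "length ys' = length xs" by (cases ys) auto
  let ?k = "length xs"
  let ?P = "\<lambda>ss. \<Prod>j<?k. W (ss ! j) (xs ! j, ys' ! j, ss ! Suc j)"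
  have "(\<Sum>ss\<in>L (Suc (length (x # xs))). if ss ! 0 = a \<and> ss ! length (x # xs) = b
        then (\<Prod>j<length (x # xs). W (ss ! j) ((x # xs) ! j, ys ! j, ss ! Suc j)) else 0)
     = (\<Sum>s\<in>UNIV. \<Sum>ss\<in>L (Suc ?k). if s = a \<and> ss ! ?k = b then W s (x, y, ss ! 0) * ?P ss else 0)"
    apply (simp only: sum_L_Suc[of _ "Suc ?k"] length_Cons)
    apply (rule sum.cong[OF refl], rule sum.cong[OF refl])
    apply (simp add: ys prod.lessThan_Suc_shift del: prod.lessThan_Suc)
    done
  also have "\<dots> = (\<Sum>ss\<in>L (Suc ?k). if ss ! ?k = b then W a (x, y, ss ! 0) * ?P ss else 0)"
    by (subst sum.swap) (simp add: sum_if_eq_conj)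
  also have "\<dots> = (\<Sum>ss\<in>L (Suc ?k). \<Sum>c\<in>UNIV. W a (x, y, c) * (if ss ! 0 = c \<and> ss ! ?k = b then ?P ss else 0))"
    by (rule sum.cong[OF refl]) (simp add: if_distrib[where f="\<lambda>x. _ * x"] cong: if_cong)
  also have "\<dots> = (\<Sum>c\<in>UNIV. W a (x, y, c) * R W xs ys' c b)"
    apply (subst sum.swap)
    apply (simp only: sum_distrib_left[symmetric] Cons.IH[OF ys(2)])
    done
  finally show ?case by (simp add: ys)
qed



lemma trans_pow_nonneg: "(\<And>a b. P a b \<ge> 0) \<Longrightarrow> trans_pow P m a b \<ge> 0"
  by (induction m arbitrary: b) (auto intro!: sum_nonneg)

lemma pi_pow:
  fixes \<pi> :: "'s::finite \<Rightarrow> real"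
  assumes "\<And>b. (\<Sum>a\<in>UNIV. \<pi> a * P a b) = \<pi> b"
  shows "(\<Sum>a\<in>UNIV. \<pi> a * trans_pow P m a b) = \<pi> b"
proof (induction m arbitrary: b)
  case 0
  then show ?case by (simp add: if_distrib[where f="\<lambda>x. _ * x"] cong: if_cong)
next
  case (Suc m)
  have "(\<Sum>a\<in>UNIV. \<pi> a * trans_pow P (Suc m) a b) = (\<Sum>c\<in>UNIV. (\<Sum>a\<in>UNIV. \<pi> a * trans_pow P m a c) * P c b)"
    by (simp add: sum_distrib_left sum_distrib_right mult.assoc) (rule sum.swap)
  also have "\<dots> = \<pi> b" using Suc assms by simp
  finally show ?case .
qed

lemma faim_W_nonneg: "is_faim W \<pi> \<Longrightarrow> W a t \<ge> 0" by (cases t) (auto simp: is_faim_def)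
lemma faim_pi_nonneg: "is_faim W \<pi> \<Longrightarrow> \<pi> a \<ge> 0" by (simp add: is_faim_def)

lemma pi_pos:
  fixes W :: "'s::finite \<Rightarrow> bool \<times> 'y::finite \<times> 's \<Rightarrow> real"
  assumes f: "is_faim W \<pi>"
  shows "\<pi> b > 0"
proof -
  have nn: "\<pi> a \<ge> 0" for a using f by (simp add: is_faim_def)
  have s1: "(\<Sum>a\<in>UNIV. \<pi> a) = 1" using f by (simp add: is_faim_def)
  obtain a0 where a0: "\<pi> a0 > 0"
  proof (rule ccontr)
    assume "\<not> thesis"
    then have "\<pi> a \<le> 0" for a using that by (meson not_le)
    then have "(\<Sum>a\<in>UNIV. \<pi> a) \<le> 0" by (simp add: sum_nonpos)
    with s1 show False by simp
  qed
  let ?P = "state_trans W"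
  have Pnn: "?P a c \<ge> 0" for a c using f by (auto simp: state_trans_def is_faim_def intro!: sum_nonneg)
  obtain m where "trans_pow ?P m a0 b > 0"
    using f unfolding is_faim_def irreducible_chain_def by blast
  then have "0 < \<pi> a0 * trans_pow ?P m a0 b" using a0 by simp
  also have "\<dots> \<le> (\<Sum>a\<in>UNIV. \<pi> a * trans_pow ?P m a b)"
    by (rule member_le_sum) (auto intro!: mult_nonneg_nonneg nn trans_pow_nonneg Pnn)
  also have "\<dots> = \<pi> b"
    by (rule pi_pow) (use f in \<open>simp add: is_faim_def\<close>)
  finally show ?thesis .
qed

lemma psi0_ge: "1 / \<pi> m \<le> psi0 \<pi>"
  unfolding psi0_def by (rule Max_ge) auto

lemma joint_eq:
  fixes W :: "'s::finite \<Rightarrow> bool \<times> 'y::finite \<times> 's \<Rightarrow> real"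
  assumes "length ys = 2 ^ n"
  shows "joint_UQ W \<pi> n i u pre ys a b =
    (\<Sum>xs\<in>L (2 ^ n). if take i (polar n xs) = pre @ [u] then \<pi> a * R W xs ys a b else 0)"
  unfolding joint_UQ_def
proof (rule sum.cong[OF refl])
  fix xs :: "bool list" assume "xs \<in> L (2 ^ n)"
  then have lx: "length xs = 2 ^ n" by simp
  have set: "{ss :: 's list. length ss = 2^n + 1 \<and> ss ! 0 = a \<and> ss ! (2^n) = b}
      = {ss \<in> L (Suc (length xs)). ss ! 0 = a \<and> ss ! length xs = b}" using lx by auto
  have "(\<Sum>ss\<in>{ss :: 's list. length ss = 2^n + 1 \<and> ss ! 0 = a \<and> ss ! (2^n) = b}. faim_prob W \<pi> xs ys ss)
     = (\<Sum>ss\<in>L (Suc (length xs)). if ss ! 0 = a \<and> ss ! length xs = b then faim_prob W \<pi> xs ys ss else 0)"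
    unfolding set by (rule sum.inter_filter) simp
  also have "\<dots> = (\<Sum>ss\<in>L (Suc (length xs)). \<pi> a * (if ss ! 0 = a \<and> ss ! length xs = b
        then (\<Prod>j<length xs. W (ss ! j) (xs ! j, ys ! j, ss ! Suc j)) else 0))"
    by (rule sum.cong[OF refl]) (auto simp: faim_prob_def)
  also have "\<dots> = \<pi> a * R W xs ys a b"
    by (simp only: sum_distrib_left[symmetric]) (use R_sum[of ys xs a b W] assms lx in simp)
  finally have e: "(\<Sum>ss\<in>{ss :: 's list. length ss = 2^n + 1 \<and> ss ! 0 = a \<and> ss ! (2^n) = b}. faim_prob W \<pi> xs ys ss)
     = \<pi> a * R W xs ys a b" .
  show "(\<Sum>ss\<in>{ss :: 's list. length ss = 2^n + 1 \<and> ss ! 0 = a \<and> ss ! (2^n) = b}.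
           if take i (polar n xs) = pre @ [u] then faim_prob W \<pi> xs ys ss else 0) =
       (if take i (polar n xs) = pre @ [u] then \<pi> a * R W xs ys a b else 0)"
    using e by simp
qed



lemma sum6:
  fixes F :: "'p \<Rightarrow> 'q \<Rightarrow> 's \<Rightarrow> 's \<Rightarrow> real" and G :: "'p \<Rightarrow> 'q \<Rightarrow> 's \<Rightarrow> 's \<Rightarrow> real"
    and A :: "'p set" and Y :: "'q set" and S :: "'s set"
  shows "(\<Sum>p1\<in>A. \<Sum>p2\<in>A. \<Sum>y1\<in>Y. \<Sum>y2\<in>Y. \<Sum>a\<in>S. \<Sum>b\<in>S. \<Sum>m\<in>S. F p1 y1 a m * G p2 y2 m b)
    = (\<Sum>m\<in>S. (\<Sum>p1\<in>A. \<Sum>y1\<in>Y. \<Sum>a\<in>S. F p1 y1 a m) * (\<Sum>p2\<in>A. \<Sum>y2\<in>Y. \<Sum>b\<in>S. G p2 y2 m b))"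
  apply (simp only: sum_product sum.swap[where A=S and B=A] sum.swap[where A=S and B=Y])
  apply (rule sum.cong[OF refl], rule sum.cong[OF refl], rule sum.cong[OF refl], rule sum.cong[OF refl])
  apply (rule trans[OF _ sum.swap], rule sum.cong[OF refl], rule sum.swap)
  done

lemma swap4a:
  fixes f :: "'p \<Rightarrow> 'q \<Rightarrow> 's \<Rightarrow> 's \<Rightarrow> real" and A :: "'p set" and Y :: "'q set" and S :: "'s set"
  shows "(\<Sum>m\<in>S. \<Sum>p\<in>A. \<Sum>y\<in>Y. \<Sum>a\<in>S. f p y a m) = (\<Sum>p\<in>A. \<Sum>y\<in>Y. \<Sum>a\<in>S. \<Sum>m\<in>S. f p y a m)"
  apply (simp only: sum.swap[where A=S and B=A] sum.swap[where A=S and B=Y])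
  apply (rule sum.cong[OF refl], rule sum.cong[OF refl])
  apply (rule sum.swap)
  done

lemma swap4b:
  fixes f :: "'p \<Rightarrow> 'q \<Rightarrow> 's \<Rightarrow> 's \<Rightarrow> real" and A :: "'p set" and Y :: "'q set" and S :: "'s set"
  shows "(\<Sum>m\<in>S. \<Sum>p\<in>A. \<Sum>y\<in>Y. \<Sum>b\<in>S. f p y m b) = (\<Sum>p\<in>A. \<Sum>y\<in>Y. \<Sum>m\<in>S. \<Sum>b\<in>S. f p y m b)"
  by (simp only: sum.swap[where A=S and B=A] sum.swap[where A=S and B=Y])

lemma sum_prod_le:
  fixes X Y :: "'s \<Rightarrow> real"
  assumes "finite S" "\<And>m. X m \<ge> 0" "\<And>m. Y m \<ge> 0"
  shows "(\<Sum>m\<in>S. X m * Y m) \<le> (\<Sum>m\<in>S. X m) * (\<Sum>m\<in>S. Y m)"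
proof -
  have "(\<Sum>m\<in>S. X m * Y m) \<le> (\<Sum>m\<in>S. X m * (\<Sum>m'\<in>S. Y m'))"
    by (rule sum_mono) (use assms in \<open>auto intro!: mult_left_mono member_le_sum\<close>)
  also have "\<dots> = (\<Sum>m\<in>S. X m) * (\<Sum>m\<in>S. Y m)" by (simp add: sum_distrib_right)
  finally show ?thesis .
qed

lemma plus_pointwise:
  fixes A0 A1 D0 D1 :: real
  assumes "A0 \<ge> 0" "A1 \<ge> 0" "D0 \<ge> 0" "D1 \<ge> 0"
  shows "\<bar>A1 * D0 - A0 * D1\<bar> + \<bar>A0 * D0 - A1 * D1\<bar> \<le> (A0 + A1) * \<bar>D0 - D1\<bar> + (D0 + D1) * \<bar>A0 - A1\<bar>"
proof -
  have e1: "A1 * D0 - A0 * D1 = ((A0 + A1) * (D0 - D1) + (A1 - A0) * (D0 + D1)) / 2" by (simp add: field_simps)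
  have e2: "A0 * D0 - A1 * D1 = ((A0 + A1) * (D0 - D1) + (A0 - A1) * (D0 + D1)) / 2" by (simp add: field_simps)
  have ab: "\<bar>(A0 + A1) * d\<bar> = (A0 + A1) * \<bar>d\<bar>" "\<bar>c * (D0 + D1)\<bar> = (D0 + D1) * \<bar>c\<bar>" for c d
    using assms by (simp_all add: abs_mult)
  have "\<bar>(A0 + A1) * (D0 - D1) + (A1 - A0) * (D0 + D1)\<bar> \<le> (A0 + A1) * \<bar>D0 - D1\<bar> + (D0 + D1) * \<bar>A0 - A1\<bar>"
    using abs_triangle_ineq[of "(A0 + A1) * (D0 - D1)" "(A1 - A0) * (D0 + D1)"]
    unfolding ab by (simp add: abs_minus_commute)
  moreover have "\<bar>(A0 + A1) * (D0 - D1) + (A0 - A1) * (D0 + D1)\<bar> \<le> (A0 + A1) * \<bar>D0 - D1\<bar> + (D0 + D1) * \<bar>A0 - A1\<bar>"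
    using abs_triangle_ineq[of "(A0 + A1) * (D0 - D1)" "(A0 - A1) * (D0 + D1)"]
    unfolding ab by simp
  ultimately show ?thesis unfolding e1 e2 by simp
qed



lemma take_cond:
  assumes "k < length v" "length p = k"
  shows "take (Suc k) v = p @ [e] \<longleftrightarrow> take k v = p \<and> v ! k = e"
  using assms by (simp add: take_Suc_conv_app_nth)

lemma sum_if_cond: "(\<Sum>m\<in>S. if C then f m else 0) = (if C then (\<Sum>m\<in>S. f m) else (0::'b::comm_monoid_add))"
  by simp

lemma J_eq:
  fixes W :: "'s::finite \<Rightarrow> bool \<times> 'y::finite \<times> 's \<Rightarrow> real"
  assumes "length ys = 2 ^ n" "length p = k" "k < 2 ^ n"
  shows "joint_UQ W \<pi> n (Suc k) e p ys a b =
    (\<Sum>xs\<in>L (2 ^ n). if take k (polar n xs) = p \<and> polar n xs ! k = e then \<pi> a * R W xs ys a b else 0)"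
  unfolding joint_eq[OF assms(1)]
  by (rule sum.cong[OF refl]) (use assms in \<open>simp add: take_cond\<close>)

lemma T_lemma:
  fixes W :: "'s::finite \<Rightarrow> bool \<times> 'y::finite \<times> 's \<Rightarrow> real"
  assumes f: "is_faim W \<pi>"
    and l: "length ys1 = 2 ^ n" "length ys2 = 2 ^ n" "length p1 = k" "length p2 = k" "k < 2 ^ n"
  shows "(\<Sum>xs1\<in>L (2 ^ n). \<Sum>xs2\<in>L (2 ^ n).
       if (take k (polar n xs1) = p1 \<and> polar n xs1 ! k = e1) \<and> (take k (polar n xs2) = p2 \<and> polar n xs2 ! k = e2)
       then \<pi> a * R W (xs1 @ xs2) (ys1 @ ys2) a b else 0)
    = (\<Sum>m\<in>UNIV. (1 / \<pi> m) * (joint_UQ W \<pi> n (Suc k) e1 p1 ys1 a m * joint_UQ W \<pi> n (Suc k) e2 p2 ys2 m b))"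
proof -
  let ?Q1 = "\<lambda>xs1. take k (polar n xs1) = p1 \<and> polar n xs1 ! k = e1"
  let ?Q2 = "\<lambda>xs2. take k (polar n xs2) = p2 \<and> polar n xs2 ! k = e2"
  have "(\<Sum>m\<in>UNIV. (1 / \<pi> m) * (joint_UQ W \<pi> n (Suc k) e1 p1 ys1 a m * joint_UQ W \<pi> n (Suc k) e2 p2 ys2 m b))
     = (\<Sum>m\<in>UNIV. \<Sum>xs1\<in>L (2 ^ n). \<Sum>xs2\<in>L (2 ^ n). (1 / \<pi> m) *
          ((if ?Q1 xs1 then \<pi> a * R W xs1 ys1 a m else 0) * (if ?Q2 xs2 then \<pi> m * R W xs2 ys2 m b else 0)))"
    by (simp only: J_eq[OF l(1) l(3) l(5)] J_eq[OF l(2) l(4) l(5)] sum_product) (simp only: sum_distrib_left)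
  also have "\<dots> = (\<Sum>m\<in>UNIV. \<Sum>xs1\<in>L (2 ^ n). \<Sum>xs2\<in>L (2 ^ n).
        if ?Q1 xs1 \<and> ?Q2 xs2 then \<pi> a * (R W xs1 ys1 a m * R W xs2 ys2 m b) else 0)"
  proof (intro sum.cong refl)
    fix m xs1 xs2
    have "\<pi> m > 0" using pi_pos[OF f] .
    then show "(1 / \<pi> m) * ((if ?Q1 xs1 then \<pi> a * R W xs1 ys1 a m else 0) * (if ?Q2 xs2 then \<pi> m * R W xs2 ys2 m b else 0))
      = (if ?Q1 xs1 \<and> ?Q2 xs2 then \<pi> a * (R W xs1 ys1 a m * R W xs2 ys2 m b) else 0)"
      by (auto simp: field_simps)
  qed
  also have "\<dots> = (\<Sum>xs1\<in>L (2 ^ n). \<Sum>xs2\<in>L (2 ^ n). \<Sum>m\<in>UNIV.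
        if ?Q1 xs1 \<and> ?Q2 xs2 then \<pi> a * (R W xs1 ys1 a m * R W xs2 ys2 m b) else 0)"
    apply (rule trans[OF sum.swap])
    apply (rule sum.cong[OF refl])
    apply (rule sum.swap)
    done
  also have "\<dots> = (\<Sum>xs1\<in>L (2 ^ n). \<Sum>xs2\<in>L (2 ^ n).
       if ?Q1 xs1 \<and> ?Q2 xs2 then \<pi> a * R W (xs1 @ xs2) (ys1 @ ys2) a b else 0)"
  proof (intro sum.cong refl)
    fix xs1 xs2 :: "bool list" assume "xs1 \<in> L (2 ^ n)"
    then have "length xs1 = length ys1" using l by simp
    then show "(\<Sum>m\<in>UNIV. if ?Q1 xs1 \<and> ?Q2 xs2 then \<pi> a * (R W xs1 ys1 a m * R W xs2 ys2 m b) else 0)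
       = (if ?Q1 xs1 \<and> ?Q2 xs2 then \<pi> a * R W (xs1 @ xs2) (ys1 @ ys2) a b else 0)"
      by (simp only: sum_if_cond) (simp add: R_append sum_distrib_left)
  qed
  finally show ?thesis by simp
qed

lemma joint_Suc:
  fixes W :: "'s::finite \<Rightarrow> bool \<times> 'y::finite \<times> 's \<Rightarrow> real"
  assumes "length ys1 = 2 ^ n" "length ys2 = 2 ^ n"
  shows "joint_UQ W \<pi> (Suc n) i' u pre (ys1 @ ys2) a b =
    (\<Sum>xs1\<in>L (2 ^ n). \<Sum>xs2\<in>L (2 ^ n). if take i' (ilv (polar n xs1) (polar n xs2)) = pre @ [u]
        then \<pi> a * R W (xs1 @ xs2) (ys1 @ ys2) a b else 0)"
proof -
  have "length (ys1 @ ys2) = 2 ^ Suc n" using assms by simp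
  note je = joint_eq[OF this]
  have "L (2 ^ Suc n) = (L (2 ^ n + 2 ^ n) :: bool list set)" by (simp add: mult_2)
  then show ?thesis
    unfolding je
    by (simp only: sum_L_app) (intro sum.cong refl; simp add: polar_Suc)
qed



lemma minus_diff:
  fixes W :: "'s::finite \<Rightarrow> bool \<times> 'y::finite \<times> 's \<Rightarrow> real"
  assumes f: "is_faim W \<pi>"
    and l: "length ys1 = 2 ^ n" "length ys2 = 2 ^ n" "length p1 = k" "length p2 = k" "k < 2 ^ n"
  shows "joint_UQ W \<pi> (Suc n) (Suc (2 * k)) False (ilv p1 p2) (ys1 @ ys2) a b
       - joint_UQ W \<pi> (Suc n) (Suc (2 * k)) True (ilv p1 p2) (ys1 @ ys2) a b
    = (\<Sum>m\<in>UNIV. (1 / \<pi> m) * ((joint_UQ W \<pi> n (Suc k) False p1 ys1 a m - joint_UQ W \<pi> n (Suc k) True p1 ys1 a m)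
         * (joint_UQ W \<pi> n (Suc k) False p2 ys2 m b - joint_UQ W \<pi> n (Suc k) True p2 ys2 m b)))"
proof -
  let ?X = "\<lambda>xs1 xs2. \<pi> a * R W (xs1 @ xs2) (ys1 @ ys2) a b"
  let ?Q = "\<lambda>p e xs. take k (polar n xs) = p \<and> polar n xs ! k = e"
  let ?T = "\<lambda>e1 e2. (\<Sum>xs1\<in>L (2 ^ n). \<Sum>xs2\<in>L (2 ^ n).
       if ?Q p1 e1 xs1 \<and> ?Q p2 e2 xs2 then ?X xs1 xs2 else 0)"
  let ?J = "\<lambda>e p ys a b. joint_UQ W \<pi> n (Suc k) e p ys a b"
  have cond: "take (Suc (2 * k)) (ilv (polar n xs1) (polar n xs2)) = ilv p1 p2 @ [u] \<longleftrightarrow>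
      take k (polar n xs1) = p1 \<and> take k (polar n xs2) = p2 \<and> (polar n xs1 ! k \<noteq> polar n xs2 ! k) = u"
    for xs1 xs2 u
  proof -
    have "take (Suc (2 * k)) (ilv (polar n xs1) (polar n xs2)) =
        ilv (take k (polar n xs1)) (take k (polar n xs2)) @ [polar n xs1 ! k \<noteq> polar n xs2 ! k]"
      using l by (simp add: take_ilv_odd)
    moreover have "length (ilv (take k (polar n xs1)) (take k (polar n xs2))) = length (ilv p1 p2)"
      using l by simp
    ultimately show ?thesis using l by (simp add: ilv_inj)
  qed
  have ju: "joint_UQ W \<pi> (Suc n) (Suc (2 * k)) u (ilv p1 p2) (ys1 @ ys2) a b =
     (\<Sum>xs1\<in>L (2 ^ n). \<Sum>xs2\<in>L (2 ^ n).
       if take k (polar n xs1) = p1 \<and> take k (polar n xs2) = p2 \<and> (polar n xs1 ! k \<noteq> polar n xs2 ! k) = u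
       then ?X xs1 xs2 else 0)" for u
    unfolding joint_Suc[OF l(1) l(2)] cond ..
  have jF: "joint_UQ W \<pi> (Suc n) (Suc (2 * k)) False (ilv p1 p2) (ys1 @ ys2) a b = ?T False False + ?T True True"
    unfolding ju by (simp only: sum.distrib[symmetric]) (intro sum.cong refl; auto)
  have jT: "joint_UQ W \<pi> (Suc n) (Suc (2 * k)) True (ilv p1 p2) (ys1 @ ys2) a b = ?T False True + ?T True False"
    unfolding ju by (simp only: sum.distrib[symmetric]) (intro sum.cong refl; auto)
  have T: "?T e1 e2 = (\<Sum>m\<in>UNIV. (1 / \<pi> m) * (?J e1 p1 ys1 a m * ?J e2 p2 ys2 m b))" for e1 e2
    by (rule T_lemma[OF f l])
  show ?thesis
    unfolding jF jT T
    by (simp only: sum.distrib[symmetric] sum_subtractf[symmetric]) (rule sum.cong[OF refl], simp add: algebra_simps)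
qed

lemma plus_diff:
  fixes W :: "'s::finite \<Rightarrow> bool \<times> 'y::finite \<times> 's \<Rightarrow> real"
  assumes f: "is_faim W \<pi>"
    and l: "length ys1 = 2 ^ n" "length ys2 = 2 ^ n" "length p1 = k" "length p2 = k" "k < 2 ^ n"
  shows "joint_UQ W \<pi> (Suc n) (Suc (Suc (2 * k))) False (ilv p1 p2 @ [g]) (ys1 @ ys2) a b
       - joint_UQ W \<pi> (Suc n) (Suc (Suc (2 * k))) True (ilv p1 p2 @ [g]) (ys1 @ ys2) a b
    = (\<Sum>m\<in>UNIV. (1 / \<pi> m) * (joint_UQ W \<pi> n (Suc k) g p1 ys1 a m * joint_UQ W \<pi> n (Suc k) False p2 ys2 m b
         - joint_UQ W \<pi> n (Suc k) (\<not> g) p1 ys1 a m * joint_UQ W \<pi> n (Suc k) True p2 ys2 m b))"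
proof -
  let ?X = "\<lambda>xs1 xs2. \<pi> a * R W (xs1 @ xs2) (ys1 @ ys2) a b"
  let ?Q = "\<lambda>p e xs. take k (polar n xs) = p \<and> polar n xs ! k = e"
  let ?T = "\<lambda>e1 e2. (\<Sum>xs1\<in>L (2 ^ n). \<Sum>xs2\<in>L (2 ^ n).
       if ?Q p1 e1 xs1 \<and> ?Q p2 e2 xs2 then ?X xs1 xs2 else 0)"
  let ?J = "\<lambda>e p ys a b. joint_UQ W \<pi> n (Suc k) e p ys a b"
  have cond: "take (Suc (Suc (2 * k))) (ilv (polar n xs1) (polar n xs2)) = (ilv p1 p2 @ [g]) @ [u] \<longleftrightarrow>
      ?Q p1 (g \<noteq> u) xs1 \<and> ?Q p2 u xs2"
    for xs1 xs2 u
  proof -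
    have "take (Suc (Suc (2 * k))) (ilv (polar n xs1) (polar n xs2)) =
        ilv (take k (polar n xs1)) (take k (polar n xs2)) @ [polar n xs1 ! k \<noteq> polar n xs2 ! k, polar n xs2 ! k]"
      using l take_ilv_even2[of k "polar n xs1" "polar n xs2"] by simp
    moreover have "length (ilv (take k (polar n xs1)) (take k (polar n xs2))) = length (ilv p1 p2)"
      using l by simp
    ultimately show ?thesis using l by (auto simp: ilv_inj)
  qed
  have ju: "joint_UQ W \<pi> (Suc n) (Suc (Suc (2 * k))) u (ilv p1 p2 @ [g]) (ys1 @ ys2) a b = ?T (g \<noteq> u) u" for u
    unfolding joint_Suc[OF l(1) l(2)] cond ..
  have T: "?T e1 e2 = (\<Sum>m\<in>UNIV. (1 / \<pi> m) * (?J e1 p1 ys1 a m * ?J e2 p2 ys2 m b))" for e1 e2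
    by (rule T_lemma[OF f l])
  show ?thesis
    unfolding ju T
    by (simp only: sum_subtractf[symmetric]) (rule sum.cong[OF refl], simp add: algebra_simps)
qed



lemma marg_p:
  fixes W :: "'s::finite \<Rightarrow> bool \<times> 'y::finite \<times> 's \<Rightarrow> real"
  assumes l: "length ys = 2 ^ n" "k < 2 ^ n"
  shows "(\<Sum>p\<in>L k. joint_UQ W \<pi> n (Suc k) False p ys a b + joint_UQ W \<pi> n (Suc k) True p ys a b)
     = (\<Sum>xs\<in>L (2 ^ n). \<pi> a * R W xs ys a b)"
proof -
  have "(\<Sum>p\<in>L k. joint_UQ W \<pi> n (Suc k) False p ys a b + joint_UQ W \<pi> n (Suc k) True p ys a b)
     = (\<Sum>p\<in>L k. \<Sum>xs\<in>L (2 ^ n). if take k (polar n xs) = p then \<pi> a * R W xs ys a b else 0)"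
  proof (rule sum.cong[OF refl])
    fix p :: "bool list" assume "p \<in> L k"
    then have lp: "length p = k" by simp
    show "joint_UQ W \<pi> n (Suc k) False p ys a b + joint_UQ W \<pi> n (Suc k) True p ys a b =
      (\<Sum>xs\<in>L (2 ^ n). if take k (polar n xs) = p then \<pi> a * R W xs ys a b else 0)"
      unfolding J_eq[OF l(1) lp l(2)] sum.distrib[symmetric]
      by (rule sum.cong[OF refl]) auto
  qed
  also have "\<dots> = (\<Sum>xs\<in>L (2 ^ n). \<Sum>p\<in>L k. if take k (polar n xs) = p then \<pi> a * R W xs ys a b else 0)"
    by (rule sum.swap)
  also have "\<dots> = (\<Sum>xs\<in>L (2 ^ n). \<pi> a * R W xs ys a b)"
    by (rule sum.cong[OF refl]) (use l in \<open>simp add: sum.delta\<close>)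
  finally show ?thesis .
qed

lemma marg1:
  fixes W :: "'s::finite \<Rightarrow> bool \<times> 'y::finite \<times> 's \<Rightarrow> real"
  assumes f: "is_faim W \<pi>" and k: "k < 2 ^ n"
  shows "(\<Sum>p\<in>L k. \<Sum>ys\<in>L (2 ^ n). \<Sum>a\<in>UNIV.
     joint_UQ W \<pi> n (Suc k) False p ys a m + joint_UQ W \<pi> n (Suc k) True p ys a m) = \<pi> m"
proof -
  have "(\<Sum>p\<in>L k. \<Sum>ys\<in>L (2 ^ n). \<Sum>a\<in>UNIV.
     joint_UQ W \<pi> n (Suc k) False p ys a m + joint_UQ W \<pi> n (Suc k) True p ys a m)
    = (\<Sum>ys\<in>L (2 ^ n). \<Sum>a\<in>UNIV. \<Sum>p\<in>L k.
     joint_UQ W \<pi> n (Suc k) False p ys a m + joint_UQ W \<pi> n (Suc k) True p ys a m)"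
    apply (rule trans[OF sum.swap])
    apply (rule sum.cong[OF refl])
    apply (rule sum.swap)
    done
  also have "\<dots> = (\<Sum>ys\<in>L (2 ^ n). \<Sum>a\<in>UNIV. \<Sum>xs\<in>L (2 ^ n). \<pi> a * R W xs ys a m)"
    by (rule sum.cong[OF refl], rule sum.cong[OF refl]) (use k in \<open>simp add: marg_p\<close>)
  also have "\<dots> = (\<Sum>xs\<in>L (2 ^ n). \<Sum>ys\<in>L (2 ^ n). \<Sum>a\<in>UNIV. \<pi> a * R W xs ys a m)"
    apply (rule trans[OF sum.cong[OF refl sum.swap]])
    apply (rule sum.swap)
    done
  also have "\<dots> = \<pi> m"
    by (rule R_stat) (use f in \<open>simp add: is_faim_def\<close>)
  finally show ?thesis .
qed

lemma marg2:
  fixes W :: "'s::finite \<Rightarrow> bool \<times> 'y::finite \<times> 's \<Rightarrow> real"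
  assumes f: "is_faim W \<pi>" and k: "k < 2 ^ n"
  shows "(\<Sum>p\<in>L k. \<Sum>ys\<in>L (2 ^ n). \<Sum>b\<in>UNIV.
     joint_UQ W \<pi> n (Suc k) False p ys m b + joint_UQ W \<pi> n (Suc k) True p ys m b) = \<pi> m"
proof -
  have "(\<Sum>p\<in>L k. \<Sum>ys\<in>L (2 ^ n). \<Sum>b\<in>UNIV.
     joint_UQ W \<pi> n (Suc k) False p ys m b + joint_UQ W \<pi> n (Suc k) True p ys m b)
    = (\<Sum>ys\<in>L (2 ^ n). \<Sum>b\<in>UNIV. \<Sum>p\<in>L k.
     joint_UQ W \<pi> n (Suc k) False p ys m b + joint_UQ W \<pi> n (Suc k) True p ys m b)"
    apply (rule trans[OF sum.swap])
    apply (rule sum.cong[OF refl])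
    apply (rule sum.swap)
    done
  also have "\<dots> = (\<Sum>ys\<in>L (2 ^ n). \<Sum>b\<in>UNIV. \<Sum>xs\<in>L (2 ^ n). \<pi> m * R W xs ys m b)"
    by (rule sum.cong[OF refl], rule sum.cong[OF refl]) (use k in \<open>simp add: marg_p\<close>)
  also have "\<dots> = \<pi> m * (\<Sum>xs\<in>L (2 ^ n). \<Sum>ys\<in>L (2 ^ n). \<Sum>b\<in>UNIV. R W xs ys m b)"
    unfolding sum_distrib_left
    apply (rule trans[OF sum.cong[OF refl sum.swap]])
    apply (rule sum.swap)
    done
  also have "\<dots> = \<pi> m"
    using R_total[where W=W and k="2 ^ n" and a=m] f by (simp add: is_faim_def)
  finally show ?thesis .
qed



lemma pidx_Suc:
  "(\<Sum>j\<in>{1..Suc n}. (if B j then 1 else 0) * 2^(Suc n - j)) =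
   2 * (\<Sum>j\<in>{1..n}. (if B j then 1 else 0) * 2^(n - j)) + (if B (Suc n) then 1 else (0::nat))"
proof -
  have "(\<Sum>j\<in>{1..Suc n}. (if B j then 1 else 0) * 2^(Suc n - j)) =
     (\<Sum>j\<in>{1..n}. (if B j then 1 else 0) * 2^(Suc n - j)) + (if B (Suc n) then 1 else (0::nat))"
    by (simp add: sum.cl_ivl_Suc)
  also have "(\<Sum>j\<in>{1..n}. (if B j then 1 else 0) * 2^(Suc n - j)) = (\<Sum>j\<in>{1..n}. (2::nat) * ((if B j then 1 else 0) * 2^(n - j)))"
    by (rule sum.cong[OF refl]) (simp add: Suc_diff_le)
  finally show ?thesis by (simp add: sum_distrib_left)
qed

lemma pidx_less: "(\<Sum>j\<in>{1..n}. (if B j then 1 else 0) * 2^(n - j)) < (2::nat) ^ n"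
proof (induction n)
  case 0
  then show ?case by simp
next
  case (Suc n)
  then show ?case unfolding pidx_Suc by simp
qed

lemma polar_index_facts:
  "polar_index B n = Suc (polar_index B n - 1)" "polar_index B n - 1 < 2 ^ n"
  "polar_index B (n + 1) = Suc (2 * (polar_index B n - 1) + (if B (Suc n) then 1 else 0))"
  using pidx_less[where n=n and B=B] pidx_Suc[where n=n and B=B] by (simp_all add: polar_index_def)



theorem proposition2:
  fixes W :: "'s::finite \<Rightarrow> bool \<times> 'y::finite \<times> 's \<Rightarrow> real"
    and \<pi> :: "'s \<Rightarrow> real"
    and B :: "nat \<Rightarrow> bool"
    and n :: nat
  assumes "is_faim W \<pi>"
    and "n \<ge> 1"
  shows "Khat W \<pi> (n + 1) (polar_index B (n + 1)) \<le>
           (if B (n + 1) then 2 * Khat W \<pi> n (polar_index B n)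
            else psi0 \<pi> * (Khat W \<pi> n (polar_index B n))\<^sup>2)"
proof -
  have f: "is_faim W \<pi>" by fact
  define k where "k = polar_index B n - 1"
  have i: "polar_index B n = Suc k" and kN: "k < 2 ^ n"
    and i1: "polar_index B (n + 1) = Suc (2 * k + (if B (Suc n) then 1 else 0))"
    using polar_index_facts[where B=B and n=n] unfolding k_def by simp_all
  define J where "J e p ys a b = joint_UQ W \<pi> n (Suc k) e p ys a b" for e p ys a b
  define D where "D p ys a b = J False p ys a b - J True p ys a b" for p ys a b
  define K where "K = Khat W \<pi> n (polar_index B n)"
  define X where "X m = (\<Sum>p\<in>L k. \<Sum>ys\<in>L (2 ^ n). \<Sum>a\<in>UNIV. \<bar>D p ys a m\<bar>)" for m
  define Y where "Y m = (\<Sum>p\<in>L k. \<Sum>ys\<in>L (2 ^ n). \<Sum>b\<in>UNIV. \<bar>D p ys m b\<bar>)" for m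
  have Kdef: "K = (\<Sum>p\<in>L k. \<Sum>ys\<in>L (2 ^ n). \<Sum>a\<in>UNIV. \<Sum>b\<in>UNIV. \<bar>D p ys a b\<bar>)"
    unfolding K_def Khat_def i D_def J_def by simp
  have sumX: "(\<Sum>m\<in>UNIV. X m) = K" unfolding X_def Kdef by (rule swap4a)
  have sumY: "(\<Sum>m\<in>UNIV. Y m) = K" unfolding Y_def Kdef by (rule swap4b)
  have Xnn: "X m \<ge> 0" for m unfolding X_def by (intro sum_nonneg) auto
  have Ynn: "Y m \<ge> 0" for m unfolding Y_def by (intro sum_nonneg) auto
  have pipos: "\<pi> m > 0" for m using pi_pos[OF f] .
  have Jnn: "J e p ys a b \<ge> 0" for e p ys a b
    unfolding J_def joint_UQ_def faim_prob_def
    by (intro sum_nonneg) (auto intro!: mult_nonneg_nonneg prod_nonneg faim_W_nonneg[OF f] faim_pi_nonneg[OF f])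
  have ysplit: "(\<Sum>ys\<in>L (2 ^ Suc n). h ys) = (\<Sum>ys1\<in>L (2 ^ n). \<Sum>ys2\<in>L (2 ^ n). h (ys1 @ ys2))"
    for h :: "'y list \<Rightarrow> real"
  proof -
    have "L (2 ^ Suc n) = (L (2 ^ n + 2 ^ n) :: 'y list set)" by (simp add: mult_2)
    then show ?thesis by (simp only: sum_L_app)
  qed
  show ?thesis
  proof (cases "B (Suc n)")
    case False
    have "Khat W \<pi> (n + 1) (polar_index B (n + 1)) = (\<Sum>pre\<in>L (2 * k). \<Sum>ys\<in>L (2 ^ Suc n). \<Sum>a\<in>UNIV. \<Sum>b\<in>UNIV.
        \<bar>joint_UQ W \<pi> (Suc n) (Suc (2 * k)) False pre ys a b - joint_UQ W \<pi> (Suc n) (Suc (2 * k)) True pre ys a b\<bar>)"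
      unfolding Khat_def i1 using False by simp
    also have "\<dots> = (\<Sum>p1\<in>L k. \<Sum>p2\<in>L k. \<Sum>ys1\<in>L (2 ^ n). \<Sum>ys2\<in>L (2 ^ n). \<Sum>a\<in>UNIV. \<Sum>b\<in>UNIV.
        \<bar>\<Sum>m\<in>UNIV. (1 / \<pi> m) * (D p1 ys1 a m * D p2 ys2 m b)\<bar>)"
      apply (simp only: sum_L_ilv ysplit)
      apply (intro sum.cong refl)
      apply (simp add: D_def J_def minus_diff[OF f _ _ _ _ kN])
      done
    also have "\<dots> \<le> (\<Sum>p1\<in>L k. \<Sum>p2\<in>L k. \<Sum>ys1\<in>L (2 ^ n). \<Sum>ys2\<in>L (2 ^ n). \<Sum>a\<in>UNIV. \<Sum>b\<in>UNIV.
        \<Sum>m\<in>UNIV. \<bar>D p1 ys1 a m\<bar> * (psi0 \<pi> * \<bar>D p2 ys2 m b\<bar>))"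
    proof (intro sum_mono)
      fix p1 p2 ys1 ys2 a b
      have "\<bar>\<Sum>m\<in>UNIV. (1 / \<pi> m) * (D p1 ys1 a m * D p2 ys2 m b)\<bar> \<le> (\<Sum>m\<in>UNIV. \<bar>(1 / \<pi> m) * (D p1 ys1 a m * D p2 ys2 m b)\<bar>)"
        by (rule sum_abs)
      also have "\<dots> \<le> (\<Sum>m\<in>UNIV. \<bar>D p1 ys1 a m\<bar> * (psi0 \<pi> * \<bar>D p2 ys2 m b\<bar>))"
      proof (rule sum_mono)
        fix m
        have "\<bar>(1 / \<pi> m) * (D p1 ys1 a m * D p2 ys2 m b)\<bar> = (1 / \<pi> m) * (\<bar>D p1 ys1 a m\<bar> * \<bar>D p2 ys2 m b\<bar>)"
          using pipos[of m] by (simp add: abs_mult)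
        also have "\<dots> \<le> psi0 \<pi> * (\<bar>D p1 ys1 a m\<bar> * \<bar>D p2 ys2 m b\<bar>)"
          by (rule mult_right_mono[OF psi0_ge]) simp
        finally show "\<bar>(1 / \<pi> m) * (D p1 ys1 a m * D p2 ys2 m b)\<bar> \<le> \<bar>D p1 ys1 a m\<bar> * (psi0 \<pi> * \<bar>D p2 ys2 m b\<bar>)"
          by (simp add: ac_simps)
      qed
      finally show "\<bar>\<Sum>m\<in>UNIV. (1 / \<pi> m) * (D p1 ys1 a m * D p2 ys2 m b)\<bar> \<le> (\<Sum>m\<in>UNIV. \<bar>D p1 ys1 a m\<bar> * (psi0 \<pi> * \<bar>D p2 ys2 m b\<bar>))" .
    qed
    also have "\<dots> = (\<Sum>m\<in>UNIV. X m * (\<Sum>p2\<in>L k. \<Sum>ys2\<in>L (2 ^ n). \<Sum>b\<in>UNIV. psi0 \<pi> * \<bar>D p2 ys2 m b\<bar>))"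
      unfolding X_def by (rule sum6)
    also have "\<dots> = psi0 \<pi> * (\<Sum>m\<in>UNIV. X m * Y m)"
      unfolding Y_def by (simp add: sum_distrib_left ac_simps)
    also have "\<dots> \<le> psi0 \<pi> * ((\<Sum>m\<in>UNIV. X m) * (\<Sum>m\<in>UNIV. Y m))"
    proof (rule mult_left_mono)
      show "(\<Sum>m\<in>UNIV. X m * Y m) \<le> (\<Sum>m\<in>UNIV. X m) * (\<Sum>m\<in>UNIV. Y m)"
        by (rule sum_prod_le) (simp_all add: Xnn Ynn)
      have "0 < 1 / \<pi> undefined" using pipos by simp
      then show "0 \<le> psi0 \<pi>" using psi0_ge[of \<pi> undefined] by linarith
    qed
    also have "\<dots> = psi0 \<pi> * K\<^sup>2" by (simp add: sumX sumY power2_eq_square)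
    finally show ?thesis using False unfolding K_def by simp
  next
    case True
    have M1: "(\<Sum>p\<in>L k. \<Sum>ys\<in>L (2 ^ n). \<Sum>a\<in>UNIV. J False p ys a m + J True p ys a m) = \<pi> m" for m
      unfolding J_def by (rule marg1[OF f kN])
    have M2: "(\<Sum>p\<in>L k. \<Sum>ys\<in>L (2 ^ n). \<Sum>b\<in>UNIV. J False p ys m b + J True p ys m b) = \<pi> m" for m
      unfolding J_def by (rule marg2[OF f kN])
    let ?P = "\<lambda>g p1 p2 ys1 ys2 a b. \<bar>\<Sum>m\<in>UNIV. (1 / \<pi> m) * (J g p1 ys1 a m * J False p2 ys2 m b - J (\<not> g) p1 ys1 a m * J True p2 ys2 m b)\<bar>"
    have "Khat W \<pi> (n + 1) (polar_index B (n + 1)) = (\<Sum>pre\<in>L (Suc (2 * k)). \<Sum>ys\<in>L (2 ^ Suc n). \<Sum>a\<in>UNIV. \<Sum>b\<in>UNIV.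
        \<bar>joint_UQ W \<pi> (Suc n) (Suc (Suc (2 * k))) False pre ys a b - joint_UQ W \<pi> (Suc n) (Suc (Suc (2 * k))) True pre ys a b\<bar>)"
      unfolding Khat_def i1 using True by simp
    also have "\<dots> = (\<Sum>p1\<in>L k. \<Sum>p2\<in>L k. \<Sum>g\<in>UNIV. \<Sum>ys1\<in>L (2 ^ n). \<Sum>ys2\<in>L (2 ^ n). \<Sum>a\<in>UNIV. \<Sum>b\<in>UNIV.
        ?P g p1 p2 ys1 ys2 a b)"
      apply (simp only: sum_L_snoc sum_L_ilv ysplit)
      apply (intro sum.cong refl)
      apply (simp add: J_def plus_diff[OF f _ _ _ _ kN])
      done
    also have "\<dots> = (\<Sum>p1\<in>L k. \<Sum>p2\<in>L k. \<Sum>ys1\<in>L (2 ^ n). \<Sum>ys2\<in>L (2 ^ n). \<Sum>a\<in>UNIV. \<Sum>b\<in>UNIV. \<Sum>g\<in>UNIV.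
        ?P g p1 p2 ys1 ys2 a b)"
      by (simp only: sum.swap[where A="UNIV :: bool set" and B="L (2 ^ n) :: 'y list set"]
          sum.swap[where A="UNIV :: bool set" and B="UNIV :: 's set"])
    also have "\<dots> \<le> (\<Sum>p1\<in>L k. \<Sum>p2\<in>L k. \<Sum>ys1\<in>L (2 ^ n). \<Sum>ys2\<in>L (2 ^ n). \<Sum>a\<in>UNIV. \<Sum>b\<in>UNIV.
        \<Sum>m\<in>UNIV. (J False p1 ys1 a m + J True p1 ys1 a m) * ((1 / \<pi> m) * \<bar>D p2 ys2 m b\<bar>)
                  + \<bar>D p1 ys1 a m\<bar> * ((1 / \<pi> m) * (J False p2 ys2 m b + J True p2 ys2 m b)))"
    proof (intro sum_mono)
      fix p1 p2 ys1 ys2 a b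
      let ?h = "\<lambda>g m. J g p1 ys1 a m * J False p2 ys2 m b - J (\<not> g) p1 ys1 a m * J True p2 ys2 m b"
      have "(\<Sum>g\<in>UNIV. ?P g p1 p2 ys1 ys2 a b) \<le> (\<Sum>g\<in>UNIV. \<Sum>m\<in>UNIV. (1 / \<pi> m) * \<bar>?h g m\<bar>)"
      proof (rule sum_mono)
        fix g
        have "?P g p1 p2 ys1 ys2 a b \<le> (\<Sum>m\<in>UNIV. \<bar>(1 / \<pi> m) * ?h g m\<bar>)" by (rule sum_abs)
        also have "\<dots> = (\<Sum>m\<in>UNIV. (1 / \<pi> m) * \<bar>?h g m\<bar>)"
          by (rule sum.cong[OF refl]) (simp add: abs_mult abs_of_pos[OF pipos])
        finally show "?P g p1 p2 ys1 ys2 a b \<le> (\<Sum>m\<in>UNIV. (1 / \<pi> m) * \<bar>?h g m\<bar>)" .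
      qed
      also have "\<dots> = (\<Sum>m\<in>UNIV. (1 / \<pi> m) * (\<bar>?h True m\<bar> + \<bar>?h False m\<bar>))"
        by (simp add: UNIV_bool sum.distrib[symmetric] algebra_simps)
      also have "\<dots> \<le> (\<Sum>m\<in>UNIV. (J False p1 ys1 a m + J True p1 ys1 a m) * ((1 / \<pi> m) * \<bar>D p2 ys2 m b\<bar>)
                  + \<bar>D p1 ys1 a m\<bar> * ((1 / \<pi> m) * (J False p2 ys2 m b + J True p2 ys2 m b)))"
      proof (rule sum_mono)
        fix m
        have "\<bar>?h True m\<bar> + \<bar>?h False m\<bar> \<le> (J False p1 ys1 a m + J True p1 ys1 a m) * \<bar>D p2 ys2 m b\<bar>
             + (J False p2 ys2 m b + J True p2 ys2 m b) * \<bar>D p1 ys1 a m\<bar>"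
          unfolding D_def by (simp add: plus_pointwise Jnn)
        then have "(1 / \<pi> m) * (\<bar>?h True m\<bar> + \<bar>?h False m\<bar>) \<le> (1 / \<pi> m) * ((J False p1 ys1 a m + J True p1 ys1 a m) * \<bar>D p2 ys2 m b\<bar>
             + (J False p2 ys2 m b + J True p2 ys2 m b) * \<bar>D p1 ys1 a m\<bar>)"
          by (rule mult_left_mono) (use pipos[of m] in simp)
        then show "(1 / \<pi> m) * (\<bar>?h True m\<bar> + \<bar>?h False m\<bar>) \<le> (J False p1 ys1 a m + J True p1 ys1 a m) * ((1 / \<pi> m) * \<bar>D p2 ys2 m b\<bar>)
                  + \<bar>D p1 ys1 a m\<bar> * ((1 / \<pi> m) * (J False p2 ys2 m b + J True p2 ys2 m b))"
          by (simp add: algebra_simps)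
      qed
      finally show "(\<Sum>g\<in>UNIV. ?P g p1 p2 ys1 ys2 a b) \<le> (\<Sum>m\<in>UNIV. (J False p1 ys1 a m + J True p1 ys1 a m) * ((1 / \<pi> m) * \<bar>D p2 ys2 m b\<bar>)
                  + \<bar>D p1 ys1 a m\<bar> * ((1 / \<pi> m) * (J False p2 ys2 m b + J True p2 ys2 m b)))" .
    qed
    also have "\<dots> = (\<Sum>p1\<in>L k. \<Sum>p2\<in>L k. \<Sum>ys1\<in>L (2 ^ n). \<Sum>ys2\<in>L (2 ^ n). \<Sum>a\<in>UNIV. \<Sum>b\<in>UNIV.
        \<Sum>m\<in>UNIV. (J False p1 ys1 a m + J True p1 ys1 a m) * ((1 / \<pi> m) * \<bar>D p2 ys2 m b\<bar>))
      + (\<Sum>p1\<in>L k. \<Sum>p2\<in>L k. \<Sum>ys1\<in>L (2 ^ n). \<Sum>ys2\<in>L (2 ^ n). \<Sum>a\<in>UNIV. \<Sum>b\<in>UNIV.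
        \<Sum>m\<in>UNIV. \<bar>D p1 ys1 a m\<bar> * ((1 / \<pi> m) * (J False p2 ys2 m b + J True p2 ys2 m b)))"
      by (simp only: sum.distrib)
    also have "\<dots> = (\<Sum>m\<in>UNIV. (\<Sum>p1\<in>L k. \<Sum>ys1\<in>L (2 ^ n). \<Sum>a\<in>UNIV. J False p1 ys1 a m + J True p1 ys1 a m)
             * (\<Sum>p2\<in>L k. \<Sum>ys2\<in>L (2 ^ n). \<Sum>b\<in>UNIV. (1 / \<pi> m) * \<bar>D p2 ys2 m b\<bar>))
      + (\<Sum>m\<in>UNIV. (\<Sum>p1\<in>L k. \<Sum>ys1\<in>L (2 ^ n). \<Sum>a\<in>UNIV. \<bar>D p1 ys1 a m\<bar>)
             * (\<Sum>p2\<in>L k. \<Sum>ys2\<in>L (2 ^ n). \<Sum>b\<in>UNIV. (1 / \<pi> m) * (J False p2 ys2 m b + J True p2 ys2 m b)))"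
      by (simp only: sum6)
    also have "\<dots> = (\<Sum>m\<in>UNIV. \<pi> m * ((1 / \<pi> m) * Y m)) + (\<Sum>m\<in>UNIV. X m * ((1 / \<pi> m) * \<pi> m))"
      unfolding M1 X_def Y_def by (simp only: sum_distrib_left[symmetric] M2)
    also have "\<dots> = (\<Sum>m\<in>UNIV. Y m) + (\<Sum>m\<in>UNIV. X m)"
    proof -
      have "\<pi> m \<noteq> 0" for m using pipos[of m] by simp
      then show ?thesis by simp
    qed
    also have "\<dots> = 2 * K" by (simp add: sumX sumY)
    finally show ?thesis using True unfolding K_def by simp
  qed
qed


end
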